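(* Let $m\ge1$ and $r,s\ge0$ with $r+s\ge1$. Then $H_m\oplus A(r\mid s)$ is capable if and only if $m=1$.
   Context: All algebras are over a field $\mathbb{F}$ of characteristic $\neq 2,3$. $A(r\mid s)$ is the abelian Lie superalgebra of dimension $(r\mid s)$. $H_m$ is the Lie superalgebra with even basis $x_1,\dots,x_m$, odd basis $y_1,\dots,y_m,z$, and nonzero brackets $[x_j,y_j]=z$ ($1\le j\le m$). A Lie superalgebra $L$ is capable if $L\cong H/Z(H)$ for some Lie superalgebra $H$. *)

theory Defs
  imports Main
begin

record ('f, 'v) lsa =
  carrier :: "'v set"
  vadd :: "'v \<Rightarrow> 'v \<Rightarrow> 'v"
  vzero :: 'v
  smul :: "'f \<Rightarrow> 'v \<Rightarrow> 'v"
  brk :: "'v \<Rightarrow> 'v \<Rightarrow> 'v"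
  part0 :: "'v set"
  part1 :: "'v set"

definition part :: "('f, 'v) lsa \<Rightarrow> nat \<Rightarrow> 'v set" where
  "part L i = (if i = 0 then part0 L else part1 L)"

definition vector_space_on :: "('f::field, 'v) lsa \<Rightarrow> bool" where
  "vector_space_on L \<longleftrightarrow>
     vzero L \<in> carrier L \<and>
     (\<forall>x\<in>carrier L. \<forall>y\<in>carrier L. vadd L x y \<in> carrier L) \<and>
     (\<forall>a. \<forall>x\<in>carrier L. smul L a x \<in> carrier L) \<and>
     (\<forall>x\<in>carrier L. \<forall>y\<in>carrier L. \<forall>z\<in>carrier L.
        vadd L (vadd L x y) z = vadd L x (vadd L y z)) \<and>
     (\<forall>x\<in>carrier L. \<forall>y\<in>carrier L. vadd L x y = vadd L y x) \<and>
     (\<forall>x\<in>carrier L. vadd L (vzero L) x = x) \<and>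
     (\<forall>x\<in>carrier L. \<exists>y\<in>carrier L. vadd L x y = vzero L) \<and>
     (\<forall>a. \<forall>x\<in>carrier L. \<forall>y\<in>carrier L.
        smul L a (vadd L x y) = vadd L (smul L a x) (smul L a y)) \<and>
     (\<forall>a b. \<forall>x\<in>carrier L. smul L (a + b) x = vadd L (smul L a x) (smul L b x)) \<and>
     (\<forall>a b. \<forall>x\<in>carrier L. smul L (a * b) x = smul L a (smul L b x)) \<and>
     (\<forall>x\<in>carrier L. smul L 1 x = x)"

definition subspace_of :: "('f::field, 'v) lsa \<Rightarrow> 'v set \<Rightarrow> bool" where
  "subspace_of L S \<longleftrightarrow> S \<subseteq> carrier L \<and> vzero L \<in> S \<and>
     (\<forall>x\<in>S. \<forall>y\<in>S. vadd L x y \<in> S) \<and> (\<forall>a. \<forall>x\<in>S. smul L a x \<in> S)"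

definition lsa :: "('f::field, 'v) lsa \<Rightarrow> bool" where
  "lsa L \<longleftrightarrow>
     vector_space_on L \<and>
     subspace_of L (part0 L) \<and> subspace_of L (part1 L) \<and>
     part0 L \<inter> part1 L = {vzero L} \<and>
     (\<forall>x\<in>carrier L. \<exists>a\<in>part0 L. \<exists>b\<in>part1 L. x = vadd L a b) \<and>
     (\<forall>x\<in>carrier L. \<forall>y\<in>carrier L. brk L x y \<in> carrier L) \<and>
     (\<forall>x\<in>carrier L. \<forall>y\<in>carrier L. \<forall>z\<in>carrier L.
        brk L (vadd L x y) z = vadd L (brk L x z) (brk L y z) \<and>
        brk L x (vadd L y z) = vadd L (brk L x y) (brk L x z)) \<and>
     (\<forall>a. \<forall>x\<in>carrier L. \<forall>y\<in>carrier L.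
        brk L (smul L a x) y = smul L a (brk L x y) \<and>
        brk L x (smul L a y) = smul L a (brk L x y)) \<and>
     (\<forall>i\<in>{0,1}. \<forall>j\<in>{0,1}. \<forall>x\<in>part L i. \<forall>y\<in>part L j.
        brk L x y \<in> part L ((i + j) mod 2)) \<and>
     (\<forall>i\<in>{0,1}. \<forall>j\<in>{0,1}. \<forall>x\<in>part L i. \<forall>y\<in>part L j.
        brk L x y = smul L (- ((-1) ^ (i * j))) (brk L y x)) \<and>
     (\<forall>i\<in>{0,1}. \<forall>j\<in>{0,1}. \<forall>k\<in>{0,1}.
        \<forall>x\<in>part L i. \<forall>y\<in>part L j. \<forall>z\<in>part L k.
        vadd L (vadd L (smul L ((-1) ^ (i * k)) (brk L x (brk L y z)))
                       (smul L ((-1) ^ (j * i)) (brk L y (brk L z x))))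
               (smul L ((-1) ^ (k * j)) (brk L z (brk L x y))) = vzero L)"

definition lsa_iso :: "('f::field, 'v) lsa \<Rightarrow> ('f, 'w) lsa \<Rightarrow> bool" where
  "lsa_iso L M \<longleftrightarrow> (\<exists>f. bij_betw f (carrier L) (carrier M) \<and>
     (\<forall>x\<in>carrier L. \<forall>y\<in>carrier L. f (vadd L x y) = vadd M (f x) (f y)) \<and>
     (\<forall>a. \<forall>x\<in>carrier L. f (smul L a x) = smul M a (f x)) \<and>
     (\<forall>x\<in>carrier L. \<forall>y\<in>carrier L. f (brk L x y) = brk M (f x) (f y)) \<and>
     f ` part0 L = part0 M \<and> f ` part1 L = part1 M)"

definition center :: "('f, 'v) lsa \<Rightarrow> 'v set" where
  "center H = {z\<in>carrier H. \<forall>x\<in>carrier H. brk H z x = vzero H}"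

definition coset :: "('f, 'v) lsa \<Rightarrow> 'v set \<Rightarrow> 'v \<Rightarrow> 'v set" where
  "coset H I x = {vadd H x i | i. i \<in> I}"

definition rep :: "'v set \<Rightarrow> 'v" where
  "rep A = (SOME x. x \<in> A)"

definition quot :: "('f, 'v) lsa \<Rightarrow> 'v set \<Rightarrow> ('f, 'v set) lsa" where
  "quot H I = \<lparr> carrier = coset H I ` carrier H,
     vadd = (\<lambda>A B. coset H I (vadd H (rep A) (rep B))),
     vzero = coset H I (vzero H),
     smul = (\<lambda>a A. coset H I (smul H a (rep A))),
     brk = (\<lambda>A B. coset H I (brk H (rep A) (rep B))),
     part0 = coset H I ` part0 H,
     part1 = coset H I ` part1 H \<rparr>"

definition dsum :: "('f, 'v) lsa \<Rightarrow> ('f, 'w) lsa \<Rightarrow> ('f, 'v \<times> 'w) lsa" where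
  "dsum L M = \<lparr> carrier = carrier L \<times> carrier M,
     vadd = (\<lambda>(x1, x2) (y1, y2). (vadd L x1 y1, vadd M x2 y2)),
     vzero = (vzero L, vzero M),
     smul = (\<lambda>a (x1, x2). (smul L a x1, smul M a x2)),
     brk = (\<lambda>(x1, x2) (y1, y2). (brk L x1 y1, brk M x2 y2)),
     part0 = part0 L \<times> part0 M,
     part1 = part1 L \<times> part1 M \<rparr>"

text \<open>H_m: coordinates u : nat => 'f supported on {0..2m}; index j-1 is x_j (even),
index m+j-1 is y_j (odd), index 2m is z (odd); only nonzero brackets [x_j,y_j] = z
(and [y_j,x_j] = -z by super skew-symmetry).\<close>

definition heis :: "nat \<Rightarrow> ('f::field, nat \<Rightarrow> 'f) lsa" where
  "heis m = \<lparr> carrier = {u. \<forall>i\<ge>2*m+1. u i = 0},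
     vadd = (\<lambda>u v i. u i + v i),
     vzero = (\<lambda>i. 0),
     smul = (\<lambda>a u i. a * u i),
     brk = (\<lambda>u v i. if i = 2*m then (\<Sum>j<m. u j * v (m+j) - u (m+j) * v j) else 0),
     part0 = {u. \<forall>i\<ge>m. u i = 0},
     part1 = {u. (\<forall>i<m. u i = 0) \<and> (\<forall>i\<ge>2*m+1. u i = 0)} \<rparr>"

text \<open>A(r|s): abelian, coordinates supported on {0..<r+s}; first r even, next s odd.\<close>

definition abel :: "nat \<Rightarrow> nat \<Rightarrow> ('f::field, nat \<Rightarrow> 'f) lsa" where
  "abel r s = \<lparr> carrier = {u. \<forall>i\<ge>r+s. u i = 0},
     vadd = (\<lambda>u v i. u i + v i),
     vzero = (\<lambda>i. 0),
     smul = (\<lambda>a u i. a * u i),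
     brk = (\<lambda>u v i. 0),
     part0 = {u. \<forall>i\<ge>r. u i = 0},
     part1 = {u. (\<forall>i<r. u i = 0) \<and> (\<forall>i\<ge>r+s. u i = 0)} \<rparr>"

definition capable_via :: "('f::field, 'v) lsa \<Rightarrow> ('f, 'h) lsa \<Rightarrow> bool" where
  "capable_via L H \<longleftrightarrow> lsa H \<and> lsa_iso L (quot H (center H))"

end

theory Submission
  imports Defs
begin



lemma vsD_1:
  assumes "vector_space_on L"
  shows "vzero L \<in> carrier L"
  using assms unfolding vector_space_on_def by (elim conjE) assumption

lemma vsD_2:
  assumes "vector_space_on L"
  shows "(\<forall>x\<in>carrier L. \<forall>y\<in>carrier L. vadd L x y \<in> carrier L)"
  using assms unfolding vector_space_on_def by (elim conjE) assumption

lemma vsD_3: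
  assumes "vector_space_on L"
  shows "(\<forall>a. \<forall>x\<in>carrier L. smul L a x \<in> carrier L)"
  using assms unfolding vector_space_on_def by (elim conjE) assumption

lemma vsD_4:
  assumes "vector_space_on L"
  shows "(\<forall>x\<in>carrier L. \<forall>y\<in>carrier L. \<forall>z\<in>carrier L.
        vadd L (vadd L x y) z = vadd L x (vadd L y z))"
  using assms unfolding vector_space_on_def by (elim conjE) assumption

lemma vsD_5:
  assumes "vector_space_on L"
  shows "(\<forall>x\<in>carrier L. \<forall>y\<in>carrier L. vadd L x y = vadd L y x)"
  using assms unfolding vector_space_on_def by (elim conjE) assumption

lemma vsD_6:
  assumes "vector_space_on L"
  shows "(\<forall>x\<in>carrier L. vadd L (vzero L) x = x)"
  using assms unfolding vector_space_on_def by (elim conjE) assumption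

lemma vsD_7:
  assumes "vector_space_on L"
  shows "(\<forall>x\<in>carrier L. \<exists>y\<in>carrier L. vadd L x y = vzero L)"
  using assms unfolding vector_space_on_def by (elim conjE) assumption

lemma vsD_8:
  assumes "vector_space_on L"
  shows "(\<forall>a. \<forall>x\<in>carrier L. \<forall>y\<in>carrier L.
        smul L a (vadd L x y) = vadd L (smul L a x) (smul L a y))"
  using assms unfolding vector_space_on_def by (elim conjE) assumption

lemma vsD_9:
  assumes "vector_space_on L"
  shows "(\<forall>a b. \<forall>x\<in>carrier L. smul L (a + b) x = vadd L (smul L a x) (smul L b x))"
  using assms unfolding vector_space_on_def by (elim conjE) assumption

lemma vsD_10:
  assumes "vector_space_on L"
  shows "(\<forall>a b. \<forall>x\<in>carrier L. smul L (a * b) x = smul L a (smul L b x))"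
  using assms unfolding vector_space_on_def by (elim conjE) assumption

lemma vsD_11:
  assumes "vector_space_on L"
  shows "(\<forall>x\<in>carrier L. smul L 1 x = x)"
  using assms unfolding vector_space_on_def by (elim conjE) assumption

lemmas vsD = vsD_1[rule_format] vsD_2[rule_format] vsD_3[rule_format] vsD_4[rule_format] vsD_5[rule_format] vsD_6[rule_format] vsD_7[rule_format] vsD_8[rule_format] vsD_9[rule_format] vsD_10[rule_format] vsD_11[rule_format]

lemma vs_add0r: "vector_space_on L \<Longrightarrow> x\<in>carrier L \<Longrightarrow> vadd L x (vzero L) = x"
  by (metis vsD(1,5,6))

lemma vs_cancel:
  assumes V: "vector_space_on L" and "a\<in>carrier L" "b\<in>carrier L" "c\<in>carrier L"
    and e: "vadd L a b = vadd L a c"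
  shows "b = c"
proof -
  obtain y where y: "y\<in>carrier L" "vadd L a y = vzero L" using vsD(7)[OF V assms(2)] by blast
  have ya: "vadd L y a = vzero L" using y assms vsD(5)[OF V] by metis
  have "b = vadd L (vadd L y a) b" using ya vsD(6)[OF V] assms by simp
  also have "\<dots> = vadd L y (vadd L a c)" using vsD(4)[OF V] y assms e by simp
  also have "\<dots> = vadd L (vadd L y a) c" using vsD(4)[OF V] y assms by simp
  also have "\<dots> = c" using ya vsD(6)[OF V] assms by simp
  finally show ?thesis .
qed

lemma vs_smul0: assumes V: "vector_space_on L" and x: "x\<in>carrier L"
  shows "smul L 0 x = vzero L"
proof -
  let ?s = "smul L 0 x"
  have s: "?s \<in> carrier L" using vsD(3)[OF V x] .
  have "vadd L ?s ?s = vadd L ?s (vzero L)"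
    using vsD(9)[OF V x, of 0 0] vs_add0r[OF V s] by simp
  thus ?thesis using vs_cancel[OF V s s vsD(1)[OF V]] by simp
qed

lemma vs_smul_zero: assumes V: "vector_space_on L"
  shows "smul L a (vzero L) = vzero L"
proof -
  let ?s = "smul L a (vzero L)"
  have z: "vzero L \<in> carrier L" using vsD(1)[OF V] .
  have s: "?s \<in> carrier L" using vsD(3)[OF V z] .
  have "vadd L ?s ?s = vadd L ?s (vzero L)"
    using vsD(8)[OF V z z, of a] vs_add0r[OF V s] vs_add0r[OF V z] by simp
  thus ?thesis using vs_cancel[OF V s s z] by simp
qed

lemma vs_neg: assumes V: "vector_space_on L" and x: "x\<in>carrier L"
  shows "vadd L x (smul L (-1) x) = vzero L"
  using vsD(9)[OF V x, of 1 "-1"] vsD(11)[OF V x] vs_smul0[OF V x] by simp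

lemma vs_smul_eq0: assumes V: "vector_space_on L" and x: "x\<in>carrier L"
  and a: "(a::'f::field) \<noteq> 0" and e: "smul L a x = vzero L"
  shows "x = vzero L"
proof -
  have "x = smul L (inverse a * a) x" using a vsD(11)[OF V x] by simp
  also have "\<dots> = smul L (inverse a) (smul L a x)" using vsD(10)[OF V x] by simp
  also have "\<dots> = vzero L" using e vs_smul_zero[OF V] by simp
  finally show ?thesis .
qed

lemma vs_add00: "vector_space_on L \<Longrightarrow> vadd L (vzero L) (vzero L) = vzero L"
  by (simp add: vsD(1,6))

lemma lsaD_1:
  assumes "lsa L"
  shows "vector_space_on L"
  using assms unfolding lsa_def by (elim conjE) assumption

lemma lsaD_2:
  assumes "lsa L"
  shows "subspace_of L (part0 L)"
  using assms unfolding lsa_def by (elim conjE) assumption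

lemma lsaD_3:
  assumes "lsa L"
  shows "subspace_of L (part1 L)"
  using assms unfolding lsa_def by (elim conjE) assumption

lemma lsaD_4:
  assumes "lsa L"
  shows "part0 L \<inter> part1 L = {vzero L}"
  using assms unfolding lsa_def by (elim conjE) assumption

lemma lsaD_5:
  assumes "lsa L"
  shows "(\<forall>x\<in>carrier L. \<exists>a\<in>part0 L. \<exists>b\<in>part1 L. x = vadd L a b)"
  using assms unfolding lsa_def by (elim conjE) assumption

lemma lsaD_6:
  assumes "lsa L"
  shows "(\<forall>x\<in>carrier L. \<forall>y\<in>carrier L. brk L x y \<in> carrier L)"
  using assms unfolding lsa_def by (elim conjE) assumption

lemma lsaD_7:
  assumes "lsa L"
  shows "(\<forall>x\<in>carrier L. \<forall>y\<in>carrier L. \<forall>z\<in>carrier L.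
        brk L (vadd L x y) z = vadd L (brk L x z) (brk L y z) \<and>
        brk L x (vadd L y z) = vadd L (brk L x y) (brk L x z))"
  using assms unfolding lsa_def by (elim conjE) assumption

lemma lsaD_8:
  assumes "lsa L"
  shows "(\<forall>a. \<forall>x\<in>carrier L. \<forall>y\<in>carrier L.
        brk L (smul L a x) y = smul L a (brk L x y) \<and>
        brk L x (smul L a y) = smul L a (brk L x y))"
  using assms unfolding lsa_def by (elim conjE) assumption

lemma lsaD_9:
  assumes "lsa L"
  shows "(\<forall>i\<in>{0,1}. \<forall>j\<in>{0,1}. \<forall>x\<in>part L i. \<forall>y\<in>part L j.
        brk L x y \<in> part L ((i + j) mod 2))"
  using assms unfolding lsa_def by (elim conjE) assumption

lemma lsaD_10:
  assumes "lsa L"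
  shows "(\<forall>i\<in>{0,1}. \<forall>j\<in>{0,1}. \<forall>x\<in>part L i. \<forall>y\<in>part L j.
        brk L x y = smul L (- ((-1) ^ (i * j))) (brk L y x))"
  using assms unfolding lsa_def by (elim conjE) assumption

lemma lsaD_11:
  assumes "lsa L"
  shows "(\<forall>i\<in>{0,1}. \<forall>j\<in>{0,1}. \<forall>k\<in>{0,1}.
        \<forall>x\<in>part L i. \<forall>y\<in>part L j. \<forall>z\<in>part L k.
        vadd L (vadd L (smul L ((-1) ^ (i * k)) (brk L x (brk L y z)))
                       (smul L ((-1) ^ (j * i)) (brk L y (brk L z x))))
               (smul L ((-1) ^ (k * j)) (brk L z (brk L x y))) = vzero L)"
  using assms unfolding lsa_def by (elim conjE) assumption

lemma lsa_add_l: "lsa L \<Longrightarrow> x\<in>carrier L \<Longrightarrow> y\<in>carrier L \<Longrightarrow> z\<in>carrier L \<Longrightarrow>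
        brk L (vadd L x y) z = vadd L (brk L x z) (brk L y z)" using lsaD_7 by blast
lemma lsa_add_r: "lsa L \<Longrightarrow> x\<in>carrier L \<Longrightarrow> y\<in>carrier L \<Longrightarrow> z\<in>carrier L \<Longrightarrow>
        brk L x (vadd L y z) = vadd L (brk L x y) (brk L x z)" using lsaD_7 by blast
lemma lsa_smul_l: "lsa L \<Longrightarrow> x\<in>carrier L \<Longrightarrow> y\<in>carrier L \<Longrightarrow> brk L (smul L a x) y = smul L a (brk L x y)"
  using lsaD_8 by blast
lemma lsa_smul_r: "lsa L \<Longrightarrow> x\<in>carrier L \<Longrightarrow> y\<in>carrier L \<Longrightarrow> brk L x (smul L a y) = smul L a (brk L x y)"
  using lsaD_8 by blast
lemmas lsa_vs = lsaD_1 and lsa_sub0 = lsaD_2 and lsa_sub1 = lsaD_3 and lsa_inter = lsaD_4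
  and lsa_decomp = lsaD_5[rule_format] and lsa_brkc = lsaD_6[rule_format]
  and lsa_grade = lsaD_9[rule_format] and lsa_skew = lsaD_10[rule_format] and lsa_jac = lsaD_11[rule_format]




lemma sub_D:
  assumes "subspace_of L S"
  shows "S \<subseteq> carrier L" "vzero L \<in> S" "\<And>x y. x\<in>S \<Longrightarrow> y\<in>S \<Longrightarrow> vadd L x y \<in> S"
    "\<And>a x. x\<in>S \<Longrightarrow> smul L a x \<in> S"
  using assms unfolding subspace_of_def by blast+

lemma part_simps[simp]: "part L 0 = part0 L" "part L (Suc 0) = part1 L"
  by (simp_all add: part_def)

lemma p0c: "lsa H \<Longrightarrow> x \<in> part0 H \<Longrightarrow> x \<in> carrier H"
  using sub_D(1)[OF lsa_sub0] by blast
lemma p1c: "lsa H \<Longrightarrow> x \<in> part1 H \<Longrightarrow> x \<in> carrier H"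
  using sub_D(1)[OF lsa_sub1] by blast

lemma brk_0l: assumes H: "lsa H" and x: "x\<in>carrier H" shows "brk H (vzero H) x = vzero H"
proof -
  note V = lsa_vs[OF H]
  have z: "vzero H \<in> carrier H" using vsD(1)[OF V] .
  let ?b = "brk H (vzero H) x"
  have b: "?b \<in> carrier H" using lsa_brkc[OF H z x] .
  have "vadd H ?b ?b = vadd H ?b (vzero H)"
    using lsa_add_l[OF H z z x] vsD(6)[OF V z] vs_add0r[OF V b] by simp
  thus ?thesis using vs_cancel[OF V b b z] by simp
qed

lemma brk_0r: assumes H: "lsa H" and x: "x\<in>carrier H" shows "brk H x (vzero H) = vzero H"
proof -
  note V = lsa_vs[OF H]
  have z: "vzero H \<in> carrier H" using vsD(1)[OF V] .
  let ?b = "brk H x (vzero H)"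
  have b: "?b \<in> carrier H" using lsa_brkc[OF H x z] .
  have "vadd H ?b ?b = vadd H ?b (vzero H)"
    using lsa_add_r[OF H x z z] vsD(6)[OF V z] vs_add0r[OF V b] by simp
  thus ?thesis using vs_cancel[OF V b b z] by simp
qed

lemma cen_carrier: "c \<in> center H \<Longrightarrow> c \<in> carrier H" by (simp add: center_def)
lemma cen_l: "c \<in> center H \<Longrightarrow> x \<in> carrier H \<Longrightarrow> brk H c x = vzero H" by (simp add: center_def)

lemma cen_zero: "lsa H \<Longrightarrow> vzero H \<in> center H"
  using brk_0l vsD(1)[OF lsa_vs] by (auto simp: center_def)

lemma cen_add: assumes H: "lsa H" and c: "c \<in> center H" and d: "d \<in> center H"
  shows "vadd H c d \<in> center H"
proof -
  note V = lsa_vs[OF H]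
  have "\<forall>x\<in>carrier H. brk H (vadd H c d) x = vzero H"
    using lsa_add_l[OF H] cen_carrier[OF c] cen_carrier[OF d] cen_l[OF c] cen_l[OF d] vs_add00[OF V]
    by simp
  thus ?thesis using vsD(2)[OF V] cen_carrier[OF c] cen_carrier[OF d] by (simp add: center_def)
qed

lemma cen_smul: assumes H: "lsa H" and c: "c \<in> center H"
  shows "smul H a c \<in> center H"
proof -
  note V = lsa_vs[OF H]
  have "\<forall>x\<in>carrier H. brk H (smul H a c) x = vzero H"
    using lsa_smul_l[OF H] cen_carrier[OF c] cen_l[OF c] vs_smul_zero[OF V] by simp
  thus ?thesis using vsD(3)[OF V] cen_carrier[OF c] by (simp add: center_def)
qed

lemma split0: assumes H: "lsa H" and a: "a \<in> part0 H" and b: "b \<in> part1 H"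
  and e: "vadd H a b = vzero H"
  shows "a = vzero H \<and> b = vzero H"
proof -
  note V = lsa_vs[OF H]
  have ac: "a \<in> carrier H" using p0c[OF H a] .
  have bc: "b \<in> carrier H" using p1c[OF H b] .
  let ?v = "smul H (-1) b"
  have v1: "?v \<in> part1 H" using sub_D(4)[OF lsa_sub1[OF H] b] .
  have vc: "?v \<in> carrier H" using vsD(3)[OF V bc] .
  have "a = vadd H a (vadd H b ?v)" using vs_neg[OF V bc] vs_add0r[OF V ac] by simp
  also have "\<dots> = vadd H (vadd H a b) ?v" using vsD(4)[OF V ac bc vc] by simp
  also have "\<dots> = ?v" using e vsD(6)[OF V vc] by simp
  finally have "a = ?v" .
  hence "a \<in> part0 H \<inter> part1 H" using a v1 by simp
  hence a0: "a = vzero H" using lsa_inter[OF H] by auto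
  hence "b = vzero H" using e vsD(6)[OF V bc] by simp
  thus ?thesis using a0 by simp
qed

lemma split1: assumes H: "lsa H" and a: "a \<in> part1 H" and b: "b \<in> part0 H"
  and e: "vadd H a b = vzero H"
  shows "a = vzero H \<and> b = vzero H"
  using split0[OF H b a] e vsD(5)[OF lsa_vs[OF H] p1c[OF H a] p0c[OF H b]] by simp

lemma cen_hom: assumes H: "lsa H" and c: "c \<in> center H"
  and c0: "c0 \<in> part0 H" and c1: "c1 \<in> part1 H" and cd: "c = vadd H c0 c1"
  and w: "w \<in> part H k" and k: "k \<in> {0,1}"
  shows "brk H c0 w = vzero H \<and> brk H c1 w = vzero H"
proof -
  have wc: "w \<in> carrier H" using w k p0c[OF H] p1c[OF H] by auto
  have e: "vadd H (brk H c0 w) (brk H c1 w) = vzero H"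
    using lsa_add_l[OF H p0c[OF H c0] p1c[OF H c1] wc] cd cen_l[OF c wc] by simp
  have g0: "brk H c0 w \<in> part H k"
    using lsa_grade[OF H, of 0 k c0 w] c0 w k by auto
  have g1: "brk H c1 w \<in> part H ((1 + k) mod 2)"
    using lsa_grade[OF H, of 1 k c1 w] c1 w k by auto
  show ?thesis
  proof (cases "k = 0")
    case True thus ?thesis using split0[OF H _ _ e] g0 g1 by simp
  next
    case False hence "k = 1" using k by auto
    thus ?thesis using split1[OF H _ _ e] g0 g1 by simp
  qed
qed

lemma cen_r: assumes H: "lsa H" and c: "c \<in> center H" and w: "w \<in> carrier H"
  shows "brk H w c = vzero H"
proof -
  note V = lsa_vs[OF H]
  obtain c0 c1 where c0: "c0 \<in> part0 H" and c1: "c1 \<in> part1 H" and cd: "c = vadd H c0 c1"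
    using lsa_decomp[OF H cen_carrier[OF c]] by blast
  obtain w0 w1 where w0: "w0 \<in> part0 H" and w1: "w1 \<in> part1 H" and wd: "w = vadd H w0 w1"
    using lsa_decomp[OF H w] by blast
  have r: "brk H u ci = vzero H" if u: "u \<in> part H k" and k: "k \<in> {0,1}"
    and ci: "ci \<in> part H l" and l: "l \<in> {0,1}" and cc: "ci = c0 \<or> ci = c1" for u ci k l
  proof -
    have "brk H ci u = vzero H" using cen_hom[OF H c c0 c1 cd u k] cc by auto
    thus ?thesis using lsa_skew[OF H k l u ci] vs_smul_zero[OF V] by simp
  qed
  have r00: "brk H w0 c0 = vzero H" using r[of w0 0 c0 0] w0 c0 by simp
  have r01: "brk H w0 c1 = vzero H" using r[of w0 0 c1 1] w0 c1 by simp
  have r10: "brk H w1 c0 = vzero H" using r[of w1 1 c0 0] w1 c0 by simp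
  have r11: "brk H w1 c1 = vzero H" using r[of w1 1 c1 1] w1 c1 by simp
  have cc0: "c0 \<in> carrier H" using p0c[OF H c0] .
  have cc1: "c1 \<in> carrier H" using p1c[OF H c1] .
  have wc0: "w0 \<in> carrier H" using p0c[OF H w0] .
  have wc1: "w1 \<in> carrier H" using p1c[OF H w1] .
  show ?thesis
    unfolding wd cd
    using lsa_add_l[OF H wc0 wc1 vsD(2)[OF V cc0 cc1]] lsa_add_r[OF H wc0 cc0 cc1]
      lsa_add_r[OF H wc1 cc0 cc1] r00 r01 r10 r11 vs_add00[OF V] by simp
qed




lemma coset_mem: assumes H: "lsa H" and x: "x \<in> carrier H"
  shows "x \<in> coset H (center H) x"
  using cen_zero[OF H] vs_add0r[OF lsa_vs[OF H] x] unfolding coset_def by force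

lemma rep_ex: assumes H: "lsa H" and x: "x \<in> carrier H"
  shows "\<exists>c\<in>center H. rep (coset H (center H) x) = vadd H x c"
proof -
  have "rep (coset H (center H) x) \<in> coset H (center H) x"
    unfolding rep_def using coset_mem[OF H x] by (rule someI)
  thus ?thesis unfolding coset_def by blast
qed

lemma coset_add_cen: assumes H: "lsa H" and x: "x \<in> carrier H" and c: "c \<in> center H"
  shows "coset H (center H) (vadd H x c) = coset H (center H) x"
proof -
  note V = lsa_vs[OF H]
  have cc: "c \<in> carrier H" using cen_carrier[OF c] .
  show ?thesis
  proof (rule set_eqI, rule iffI)
    fix u assume "u \<in> coset H (center H) (vadd H x c)"
    then obtain i where i: "i \<in> center H" and u: "u = vadd H (vadd H x c) i"
      unfolding coset_def by blast
    have "u = vadd H x (vadd H c i)" using u vsD(4)[OF V x cc cen_carrier[OF i]] by simp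
    moreover have "vadd H c i \<in> center H" using cen_add[OF H c i] .
    ultimately show "u \<in> coset H (center H) x" unfolding coset_def by blast
  next
    fix u assume "u \<in> coset H (center H) x"
    then obtain i where i: "i \<in> center H" and u: "u = vadd H x i"
      unfolding coset_def by blast
    have ic: "i \<in> carrier H" using cen_carrier[OF i] .
    let ?n = "smul H (-1) c"
    have n: "?n \<in> center H" using cen_smul[OF H c] .
    have nc: "?n \<in> carrier H" using cen_carrier[OF n] .
    have j: "vadd H ?n i \<in> center H" using cen_add[OF H n i] .
    have "vadd H (vadd H x c) (vadd H ?n i) = vadd H x (vadd H c (vadd H ?n i))"
      using vsD(4)[OF V x cc] vsD(2)[OF V nc ic] by simp
    also have "\<dots> = vadd H x (vadd H (vadd H c ?n) i)" using vsD(4)[OF V cc nc ic] by simp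
    also have "\<dots> = u" using vs_neg[OF V cc] vsD(6)[OF V ic] u by simp
    finally show "u \<in> coset H (center H) (vadd H x c)" unfolding coset_def using j by blast
  qed
qed

lemma coset_eqD: assumes H: "lsa H" and x: "x \<in> carrier H" and y: "y \<in> carrier H"
  and e: "coset H (center H) x = coset H (center H) y"
  shows "\<exists>c\<in>center H. x = vadd H y c"
  using coset_mem[OF H x] e unfolding coset_def by blast

lemma coset_zero: assumes H: "lsa H"
  shows "coset H (center H) (vzero H) = center H"
  using vsD(6)[OF lsa_vs[OF H]] cen_carrier unfolding coset_def by force

lemma coset_cen: assumes H: "lsa H" and c: "c \<in> center H"
  shows "coset H (center H) c = center H"
proof -
  have "coset H (center H) (vadd H (vzero H) c) = coset H (center H) (vzero H)"
    using coset_add_cen[OF H vsD(1)[OF lsa_vs[OF H]] c] .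
  thus ?thesis using vsD(6)[OF lsa_vs[OF H] cen_carrier[OF c]] coset_zero[OF H] by simp
qed

lemma cen_of_coset: assumes H: "lsa H" and x: "x \<in> carrier H"
  and e: "coset H (center H) x = center H"
  shows "x \<in> center H"
  using coset_mem[OF H x] e by simp

lemma brk_rep: assumes H: "lsa H" and a: "a \<in> carrier H" and b: "b \<in> carrier H"
  shows "brk H (rep (coset H (center H) a)) (rep (coset H (center H) b)) = brk H a b"
proof -
  note V = lsa_vs[OF H]
  obtain c1 where c1: "c1 \<in> center H" and r1: "rep (coset H (center H) a) = vadd H a c1"
    using rep_ex[OF H a] by blast
  obtain c2 where c2: "c2 \<in> center H" and r2: "rep (coset H (center H) b) = vadd H b c2"
    using rep_ex[OF H b] by blast
  have cc1: "c1 \<in> carrier H" using cen_carrier[OF c1] .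
  have cc2: "c2 \<in> carrier H" using cen_carrier[OF c2] .
  have bc: "vadd H b c2 \<in> carrier H" using vsD(2)[OF V b cc2] .
  have "brk H (vadd H a c1) (vadd H b c2) = vadd H (brk H a (vadd H b c2)) (brk H c1 (vadd H b c2))"
    using lsa_add_l[OF H a cc1 bc] .
  also have "\<dots> = vadd H (vadd H (brk H a b) (brk H a c2)) (vzero H)"
    using lsa_add_r[OF H a b cc2] cen_l[OF c1 bc] by simp
  also have "\<dots> = brk H a b"
    using cen_r[OF H c2 a] vs_add0r[OF V] lsa_brkc[OF H a b] vsD(1)[OF V] by simp
  finally show ?thesis using r1 r2 by simp
qed

lemma smul_rep: assumes H: "lsa H" and a: "a \<in> carrier H"
  shows "coset H (center H) (smul H t (rep (coset H (center H) a))) = coset H (center H) (smul H t a)"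
proof -
  note V = lsa_vs[OF H]
  obtain c1 where c1: "c1 \<in> center H" and r1: "rep (coset H (center H) a) = vadd H a c1"
    using rep_ex[OF H a] by blast
  have "smul H t (rep (coset H (center H) a)) = vadd H (smul H t a) (smul H t c1)"
    using r1 vsD(8)[OF V a cen_carrier[OF c1]] by simp
  thus ?thesis using coset_add_cen[OF H vsD(3)[OF V a] cen_smul[OF H c1]] by simp
qed

lemma rep_carrier: assumes H: "lsa H" and a: "a \<in> carrier H"
  shows "rep (coset H (center H) a) \<in> carrier H"
  using rep_ex[OF H a] vsD(2)[OF lsa_vs[OF H] a] cen_carrier by force




definition ee :: "nat \<Rightarrow> nat \<Rightarrow> 'f::field" where "ee i = (\<lambda>k. if k = i then 1 else 0)"

lemma sum_ee: "a < m \<Longrightarrow> (\<Sum>j<m. ee a j * v j) = (v a :: 'f::field)"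
proof -
  assume a: "a < m"
  have "(\<Sum>j<m. ee a j * v j) = (\<Sum>j<m. if j = a then v a else 0)"
    by (rule sum.cong) (auto simp: ee_def)
  also have "\<dots> = v a" using a by (simp add: sum.delta)
  finally show ?thesis .
qed

lemma hsum_x: assumes a: "a < m"
  shows "(\<Sum>j<m. ee a j * v (m+j) - ee a (m+j) * v j) = (v (m+a) :: 'f::field)"
proof -
  have "(\<Sum>j<m. ee a j * v (m+j) - ee a (m+j) * v j) = (\<Sum>j<m. ee a j * v (m+j))"
    by (rule sum.cong) (use a in \<open>auto simp: ee_def\<close>)
  also have "\<dots> = v (m+a)" using sum_ee[OF a, of "\<lambda>j. v (m+j)"] by simp
  finally show ?thesis .
qed

lemma hsum_y: assumes a: "a < m"
  shows "(\<Sum>j<m. ee (m+a) j * v (m+j) - ee (m+a) (m+j) * v j) = (- v a :: 'f::field)"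
proof -
  have "(\<Sum>j<m. ee (m+a) j * v (m+j) - ee (m+a) (m+j) * v j) = (\<Sum>j<m. - (ee a j * v j))"
    by (rule sum.cong) (auto simp: ee_def)
  also have "\<dots> = - v a" using sum_ee[OF a, of v] by (simp add: sum_negf)
  finally show ?thesis .
qed

lemma hsum_rx: assumes a: "a < m"
  shows "(\<Sum>j<m. u j * ee a (m+j) - u (m+j) * ee a j) = (- u (m+a) :: 'f::field)"
proof -
  have "(\<Sum>j<m. u j * ee a (m+j) - u (m+j) * ee a j) = (\<Sum>j<m. - (ee a j * u (m+j)))"
    by (rule sum.cong) (use a in \<open>auto simp: ee_def\<close>)
  also have "\<dots> = - u (m+a)" using sum_ee[OF a, of "\<lambda>j. u (m+j)"] by (simp add: sum_negf)
  finally show ?thesis .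
qed

lemma dsum_simps:
  "carrier (dsum L M) = carrier L \<times> carrier M"
  "part0 (dsum L M) = part0 L \<times> part0 M"
  "part1 (dsum L M) = part1 L \<times> part1 M"
  "vzero (dsum L M) = (vzero L, vzero M)"
  "brk (dsum L M) (a1,a2) (b1,b2) = (brk L a1 b1, brk M a2 b2)"
  "smul (dsum L M) t (a1,a2) = (smul L t a1, smul M t a2)"
  "vadd (dsum L M) (a1,a2) (b1,b2) = (vadd L a1 b1, vadd M a2 b2)"
  by (simp_all add: dsum_def)

lemma heis_simps:
  "carrier (heis m) = {u. \<forall>i\<ge>2*m+1. u i = 0}"
  "part0 (heis m) = {u. \<forall>i\<ge>m. u i = 0}"
  "part1 (heis m) = {u. (\<forall>i<m. u i = 0) \<and> (\<forall>i\<ge>2*m+1. u i = 0)}"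
  "vzero (heis m) = (\<lambda>i. 0)"
  "brk (heis m) u v = (\<lambda>i. if i = 2*m then (\<Sum>j<m. u j * v (m+j) - u (m+j) * v j) else 0)"
  "smul (heis m) t u = (\<lambda>i. t * u i)"
  "vadd (heis m) u v = (\<lambda>i. u i + v i)"
  by (simp_all add: heis_def)

lemma abel_simps:
  "carrier (abel r s) = {u. \<forall>i\<ge>r+s. u i = 0}"
  "part0 (abel r s) = {u. \<forall>i\<ge>r. u i = 0}"
  "part1 (abel r s) = {u. (\<forall>i<r. u i = 0) \<and> (\<forall>i\<ge>r+s. u i = 0)}"
  "vzero (abel r s) = (\<lambda>i. 0)"
  "brk (abel r s) u v = (\<lambda>i. 0)"
  "smul (abel r s) t u = (\<lambda>i. t * u i)"
  "vadd (abel r s) u v = (\<lambda>i. u i + v i)"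
  by (simp_all add: abel_def)

lemma not_capable:
  fixes H :: "('f::field, 'h) lsa"
  assumes m: "2 \<le> m" and H: "lsa H"
    and iso: "lsa_iso (dsum (heis m) (abel r s) :: ('f, _) lsa) (quot H (center H))"
  shows False
proof -
  define L where "L = (dsum (heis m) (abel r s) :: ('f, _) lsa)"
  define cs where "cs = coset H (center H)"
  note V = lsa_vs[OF H]
  obtain f where bij: "bij_betw f (carrier L) (carrier (quot H (center H)))"
    and fad: "\<forall>x\<in>carrier L. \<forall>y\<in>carrier L. f (vadd L x y) = vadd (quot H (center H)) (f x) (f y)"
    and fsm: "\<forall>a. \<forall>x\<in>carrier L. f (smul L a x) = smul (quot H (center H)) a (f x)"
    and fbr: "\<forall>x\<in>carrier L. \<forall>y\<in>carrier L. f (brk L x y) = brk (quot H (center H)) (f x) (f y)"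
    and fp0: "f ` part0 L = part0 (quot H (center H))"
    and fp1: "f ` part1 L = part1 (quot H (center H))"
    using iso[unfolded lsa_iso_def, folded L_def] by (elim exE conjE) (rule that)
  have fcar: "f ` carrier L = cs ` carrier H" using bij unfolding bij_betw_def cs_def quot_def by simp
  have fp0': "f ` part0 L = cs ` part0 H" using fp0 unfolding cs_def quot_def by simp
  have fp1': "f ` part1 L = cs ` part1 H" using fp1 unfolding cs_def quot_def by simp
  have finj: "inj_on f (carrier L)" using bij bij_betw_def by blast
  have L1: "f (brk L a b) = cs (brk H a' b')"
    if a: "a \<in> carrier L" and b: "b \<in> carrier L" and a': "a' \<in> carrier H" and b': "b' \<in> carrier H"
      and fa: "f a = cs a'" and fb: "f b = cs b'" for a b a' b'
    using fbr a b fa fb brk_rep[OF H a' b'] unfolding cs_def by (simp add: quot_def)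
  have L3: "f (smul L t a) = cs (smul H t a')"
    if a: "a \<in> carrier L" and a': "a' \<in> carrier H" and fa: "f a = cs a'" for a a' t
    using fsm a fa smul_rep[OF H a'] unfolding cs_def by (simp add: quot_def)
  define Z0 where "Z0 = (\<lambda>i::nat. 0::'f)"
  define X1 where "X1 = (ee 0 :: nat \<Rightarrow> 'f, Z0)"
  define Y1 where "Y1 = (ee m :: nat \<Rightarrow> 'f, Z0)"
  define X2 where "X2 = (ee 1 :: nat \<Rightarrow> 'f, Z0)"
  define Y2 where "Y2 = (ee (m+1) :: nat \<Rightarrow> 'f, Z0)"
  define Z where "Z = (ee (2*m) :: nat \<Rightarrow> 'f, Z0)"
  have X1p: "X1 \<in> part0 L" and X2p: "X2 \<in> part0 L" and Y1p: "Y1 \<in> part1 L" and Y2p: "Y2 \<in> part1 L"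
    using m by (auto simp: L_def X1_def X2_def Y1_def Y2_def Z0_def dsum_simps heis_simps abel_simps ee_def)
  have ZL: "Z \<in> carrier L" and X1c: "X1 \<in> carrier L" and X2c: "X2 \<in> carrier L"
    and Y1c: "Y1 \<in> carrier L" and Y2c: "Y2 \<in> carrier L"
    using m by (auto simp: L_def X1_def X2_def Y1_def Y2_def Z_def Z0_def dsum_simps heis_simps abel_simps ee_def)
  have bXY1: "brk L X1 Y1 = Z"
    using hsum_x[of 0 m "ee m"] m by (auto simp: L_def X1_def Y1_def Z_def Z0_def dsum_simps heis_simps abel_simps ee_def)
  have bXY2: "brk L X2 Y2 = Z"
    using hsum_x[of 1 m "ee (m+1)"] m by (auto simp: L_def X2_def Y2_def Z_def Z0_def dsum_simps heis_simps abel_simps ee_def)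
  have z1: "brk L Y2 X1 = vzero L"
    using hsum_y[of 1 m "ee 0"] m by (auto simp: L_def X1_def Y2_def Z0_def dsum_simps heis_simps abel_simps ee_def)
  have z2: "brk L X1 X2 = vzero L"
    using hsum_x[of 0 m "ee 1"] m by (auto simp: L_def X1_def X2_def Z0_def dsum_simps heis_simps abel_simps ee_def)
  have z3: "brk L Y2 Y1 = vzero L"
    using hsum_y[of 1 m "ee m"] m by (auto simp: L_def Y1_def Y2_def Z0_def dsum_simps heis_simps abel_simps ee_def)
  have z4: "brk L Y1 X2 = vzero L"
    using hsum_y[of 0 m "ee 1"] m by (auto simp: L_def Y1_def X2_def Z0_def dsum_simps heis_simps abel_simps ee_def)
  have bY1v: "brk L Y1 v = smul L (- fst v 0) Z" for v
    using hsum_y[of 0 m "fst v"] m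
    by (cases v) (auto simp: L_def Y1_def Z_def Z0_def dsum_simps heis_simps abel_simps ee_def)
  have bvX1: "brk L v X1 = smul L (- fst v m) Z" for v
    using hsum_rx[of 0 m "fst v"] m
    by (cases v) (auto simp: L_def X1_def Z_def Z0_def dsum_simps heis_simps abel_simps ee_def)
  have Zne: "Z \<noteq> vzero L" by (auto simp: L_def Z_def dsum_simps heis_simps abel_simps ee_def fun_eq_iff)
  have Z0L: "smul L 0 Z = vzero L" by (simp add: L_def Z_def Z0_def dsum_simps heis_simps abel_simps)
  obtain x1 where x1: "x1 \<in> part0 H" "f X1 = cs x1" using X1p fp0' by (metis imageE image_eqI)
  obtain x2 where x2: "x2 \<in> part0 H" "f X2 = cs x2" using X2p fp0' by (metis imageE image_eqI)
  obtain y1 where y1: "y1 \<in> part1 H" "f Y1 = cs y1" using Y1p fp1' by (metis imageE image_eqI)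
  obtain y2 where y2: "y2 \<in> part1 H" "f Y2 = cs y2" using Y2p fp1' by (metis imageE image_eqI)
  have x1c: "x1 \<in> carrier H" using p0c[OF H x1(1)] .
  have x2c: "x2 \<in> carrier H" using p0c[OF H x2(1)] .
  have y1c: "y1 \<in> carrier H" using p1c[OF H y1(1)] .
  have y2c: "y2 \<in> carrier H" using p1c[OF H y2(1)] .
  define \<zeta> where "\<zeta> = brk H x1 y1"
  have zc: "\<zeta> \<in> carrier H" unfolding \<zeta>_def using lsa_brkc[OF H x1c y1c] .
  have fZ: "f Z = cs \<zeta>" using L1[OF X1c Y1c x1c y1c x1(2) y1(2)] bXY1 \<zeta>_def by simp
  have fZ2: "f Z = cs (brk H x2 y2)" using L1[OF X2c Y2c x2c y2c x2(2) y2(2)] bXY2 by simp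
  have f0: "f (vzero L) = center H"
    using L3[OF ZL zc fZ, of 0] Z0L vs_smul0[OF V zc] coset_zero[OF H] unfolding cs_def by simp
  have cenL: "brk H a' b' \<in> center H"
    if a: "a \<in> carrier L" and b: "b \<in> carrier L" and a': "a' \<in> carrier H" and b': "b' \<in> carrier H"
      and fa: "f a = cs a'" and fb: "f b = cs b'" and z: "brk L a b = vzero L" for a b a' b'
    using L1[OF a b a' b' fa fb] z f0 cen_of_coset[OF H lsa_brkc[OF H a' b']] unfolding cs_def by simp
  have c1: "brk H y2 x1 \<in> center H" using cenL[OF Y2c X1c y2c x1c y2(2) x1(2) z1] .
  have c2: "brk H x1 x2 \<in> center H" using cenL[OF X1c X2c x1c x2c x1(2) x2(2) z2] .
  have c3: "brk H y2 y1 \<in> center H" using cenL[OF Y2c Y1c y2c y1c y2(2) y1(2) z3] .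
  have c4: "brk H y1 x2 \<in> center H" using cenL[OF Y1c X2c y1c x2c y1(2) x2(2) z4] .
  obtain c where c: "c \<in> center H" and zz: "\<zeta> = vadd H (brk H x2 y2) c"
    using coset_eqD[OF H zc lsa_brkc[OF H x2c y2c]] fZ fZ2 unfolding cs_def by auto
  have b22: "brk H x2 y2 \<in> carrier H" using lsa_brkc[OF H x2c y2c] .
  have k1: "brk H x1 \<zeta> = vzero H"
  proof -
    have J: "vadd H (vadd H (smul H 1 (brk H x1 (brk H x2 y2))) (smul H 1 (brk H x2 (brk H y2 x1))))
               (smul H 1 (brk H y2 (brk H x1 x2))) = vzero H"
      using lsa_jac[OF H, of 0 0 1 x1 x2 y2] x1 x2 y2 by simp
    have "brk H x2 (brk H y2 x1) = vzero H" using cen_r[OF H c1 x2c] .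
    moreover have "brk H y2 (brk H x1 x2) = vzero H" using cen_r[OF H c2 y2c] .
    ultimately have "brk H x1 (brk H x2 y2) = vzero H"
      using J vsD(11)[OF V] vs_add0r[OF V] lsa_brkc[OF H x1c b22] vsD(1)[OF V] by simp
    thus ?thesis using zz lsa_add_r[OF H x1c b22 cen_carrier[OF c]] cen_r[OF H c x1c]
        vs_add0r[OF V] vsD(1)[OF V] by simp
  qed
  have k2: "brk H y1 \<zeta> = vzero H"
  proof -
    have J: "vadd H (vadd H (smul H (-1) (brk H y1 (brk H x2 y2))) (smul H 1 (brk H x2 (brk H y2 y1))))
               (smul H 1 (brk H y2 (brk H y1 x2))) = vzero H"
      using lsa_jac[OF H, of 1 0 1 y1 x2 y2] y1 x2 y2 by simp
    have "brk H x2 (brk H y2 y1) = vzero H" using cen_r[OF H c3 x2c] .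
    moreover have "brk H y2 (brk H y1 x2) = vzero H" using cen_r[OF H c4 y2c] .
    ultimately have "smul H (-1) (brk H y1 (brk H x2 y2)) = vzero H"
      using J vsD(11)[OF V] vs_add0r[OF V] vsD(3)[OF V lsa_brkc[OF H y1c b22]] vsD(1)[OF V] by simp
    hence "brk H y1 (brk H x2 y2) = vzero H"
      using vs_smul_eq0[OF V lsa_brkc[OF H y1c b22], of "-1"] by simp
    thus ?thesis using zz lsa_add_r[OF H y1c b22 cen_carrier[OF c]] cen_r[OF H c y1c]
        vs_add0r[OF V] vsD(1)[OF V] by simp
  qed
  have surj: "\<exists>v\<in>carrier L. f v = cs w" if w: "w \<in> carrier H" for w
    using fcar w by (metis imageE image_eqI)
  have k3: "brk H x1 (brk H y1 w) = vzero H" if w: "w \<in> carrier H" for w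
  proof -
    obtain v where v: "v \<in> carrier L" "f v = cs w" using surj[OF w] by blast
    have yw: "brk H y1 w \<in> carrier H" using lsa_brkc[OF H y1c w] .
    have "cs (brk H y1 w) = cs (smul H (- fst v 0) \<zeta>)"
      using L1[OF Y1c v(1) y1c w y1(2) v(2)] bY1v L3[OF ZL zc fZ] by simp
    then obtain d where d: "d \<in> center H" and dd: "brk H y1 w = vadd H (smul H (- fst v 0) \<zeta>) d"
      using coset_eqD[OF H yw vsD(3)[OF V zc]] unfolding cs_def by blast
    show ?thesis using dd lsa_add_r[OF H x1c vsD(3)[OF V zc] cen_carrier[OF d]] cen_r[OF H d x1c]
        lsa_smul_r[OF H x1c zc] k1 vs_smul_zero[OF V] vs_add00[OF V] by simp
  qed
  have k4: "brk H y1 (brk H w x1) = vzero H" if w: "w \<in> carrier H" for w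
  proof -
    obtain v where v: "v \<in> carrier L" "f v = cs w" using surj[OF w] by blast
    have yw: "brk H w x1 \<in> carrier H" using lsa_brkc[OF H w x1c] .
    have "cs (brk H w x1) = cs (smul H (- fst v m) \<zeta>)"
      using L1[OF v(1) X1c w x1c v(2) x1(2)] bvX1 L3[OF ZL zc fZ] by simp
    then obtain d where d: "d \<in> center H" and dd: "brk H w x1 = vadd H (smul H (- fst v m) \<zeta>) d"
      using coset_eqD[OF H yw vsD(3)[OF V zc]] unfolding cs_def by blast
    show ?thesis using dd lsa_add_r[OF H y1c vsD(3)[OF V zc] cen_carrier[OF d]] cen_r[OF H d y1c]
        lsa_smul_r[OF H y1c zc] k2 vs_smul_zero[OF V] vs_add00[OF V] by simp
  qed
  have zp: "\<zeta> \<in> part1 H" using lsa_grade[OF H, of 0 1 x1 y1] x1 y1 \<zeta>_def by simp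
  have k5: "brk H \<zeta> w = vzero H" if w: "w \<in> part H k" and k: "k \<in> {0,1}" for w k
  proof -
    have wc: "w \<in> carrier H" using w k p0c[OF H] p1c[OF H] by auto
    have J: "vadd H (vadd H (smul H ((-1)^(0*k)) (brk H x1 (brk H y1 w))) (smul H ((-1)^(1*0)) (brk H y1 (brk H w x1))))
               (smul H ((-1)^(k*1)) (brk H w (brk H x1 y1))) = vzero H"
      using lsa_jac[OF H, of 0 1 k x1 y1 w] x1 y1 w k by simp
    hence "smul H ((-1)^k) (brk H w \<zeta>) = vzero H"
      using k3[OF wc] k4[OF wc] vsD(11)[OF V] vs_add00[OF V] vsD(6)[OF V] \<zeta>_def
        vsD(3)[OF V lsa_brkc[OF H wc zc]] vsD(1)[OF V] by simp
    hence wz: "brk H w \<zeta> = vzero H" using vs_smul_eq0[OF V lsa_brkc[OF H wc zc], of "(-1)^k"] by simp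
    show ?thesis using lsa_skew[OF H _ k _ w, of 1 \<zeta>] zp wz vs_smul_zero[OF V] by simp
  qed
  have zcen: "\<zeta> \<in> center H"
  proof -
    have "brk H \<zeta> w = vzero H" if w: "w \<in> carrier H" for w
    proof -
      obtain w0 w1 where w0: "w0 \<in> part0 H" and w1: "w1 \<in> part1 H" and wd: "w = vadd H w0 w1"
        using lsa_decomp[OF H w] by blast
      show ?thesis using wd lsa_add_r[OF H zc p0c[OF H w0] p1c[OF H w1]] k5[of w0 0] k5[of w1 1] w0 w1
          vs_add00[OF V] by simp
    qed
    thus ?thesis using zc unfolding center_def by blast
  qed
  have "f Z = f (vzero L)" using fZ coset_cen[OF H zcen] f0 unfolding cs_def by simp
  moreover have "vzero L \<in> carrier L" by (simp add: L_def dsum_simps heis_simps abel_simps)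
  ultimately have "Z = vzero L" using finj ZL by (meson inj_onD)
  thus False using Zne by simp
qed




definition evc :: "nat \<Rightarrow> nat \<Rightarrow> nat \<Rightarrow> bool" where
  "evc r n k \<longleftrightarrow> k = 0 \<or> (4 \<le> k \<and> k < 4+r) \<or> (4+n \<le> k \<and> k < 4+n+r)"

definition capH :: "nat \<Rightarrow> nat \<Rightarrow> ('f::field, nat \<Rightarrow> 'f) lsa" where
  "capH r n = \<lparr> carrier = {u. \<forall>k\<ge>4+2*n. u k = 0},
     vadd = (\<lambda>u v k. u k + v k),
     vzero = (\<lambda>k. 0),
     smul = (\<lambda>a u k. a * u k),
     brk = (\<lambda>u v k. if k = 2 then u 0 * v 1 - u 1 * v 0
                   else if k = 3 then u 0 * v 2 - u 2 * v 0
                   else if 4+n \<le> k \<and> k < 4+2*n then u 0 * v (k-n) - u (k-n) * v 0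
                   else 0),
     part0 = {u. \<forall>k. \<not> evc r n k \<longrightarrow> u k = 0},
     part1 = {u. (\<forall>k. evc r n k \<longrightarrow> u k = 0) \<and> (\<forall>k\<ge>4+2*n. u k = 0)} \<rparr>"

lemma capH_simps:
  "carrier (capH r n) = {u. \<forall>k\<ge>4+2*n. u k = 0}"
  "vadd (capH r n) u v = (\<lambda>k. u k + v k)"
  "vzero (capH r n) = (\<lambda>k. 0)"
  "smul (capH r n) a u = (\<lambda>k. a * u k)"
  "brk (capH r n) u v = (\<lambda>k. if k = 2 then u 0 * v 1 - u 1 * v 0
                   else if k = 3 then u 0 * v 2 - u 2 * v 0
                   else if 4+n \<le> k \<and> k < 4+2*n then u 0 * v (k-n) - u (k-n) * v 0
                   else 0)"
  "part0 (capH r n) = {u. \<forall>k. \<not> evc r n k \<longrightarrow> u k = 0}"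
  "part1 (capH r n) = {u. (\<forall>k. evc r n k \<longrightarrow> u k = 0) \<and> (\<forall>k\<ge>4+2*n. u k = 0)}"
  by (simp_all add: capH_def)

lemma evc_basic: "evc r n 0" "\<not> evc r n (Suc 0)" "\<not> evc r n 1" "\<not> evc r n 2" "\<not> evc r n 3"
  by (simp_all add: evc_def)

lemma evc_shift: "r \<le> n \<Longrightarrow> 4+n \<le> k \<Longrightarrow> k < 4+2*n \<Longrightarrow> evc r n (k-n) = evc r n k"
  by (auto simp: evc_def)

lemma evc_big: "r \<le> n \<Longrightarrow> 4+2*n \<le> k \<Longrightarrow> \<not> evc r n k"
  by (auto simp: evc_def)

lemma capH_vs: "vector_space_on (capH r n :: ('f::field, _) lsa)"
  unfolding vector_space_on_def capH_simps
  apply (intro conjI)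
  apply (simp_all add: fun_eq_iff algebra_simps)
  apply (intro allI impI)
  apply (rule_tac x="\<lambda>k. - x k" in exI)
  apply simp
  done

lemma capH_sub0: "r \<le> n \<Longrightarrow> subspace_of (capH r n :: ('f::field, _) lsa) (part0 (capH r n))"
  unfolding subspace_of_def capH_simps using evc_big by auto

lemma capH_sub1: "subspace_of (capH r n :: ('f::field, _) lsa) (part1 (capH r n))"
  unfolding subspace_of_def capH_simps by auto

lemma capH_inter: "r \<le> n \<Longrightarrow> part0 (capH r n :: ('f::field, _) lsa) \<inter> part1 (capH r n) = {vzero (capH r n)}"
  unfolding capH_simps by (auto simp: fun_eq_iff evc_basic)

lemma capH_decomp: "r \<le> n \<Longrightarrow> x \<in> carrier (capH r n :: ('f::field, _) lsa) \<Longrightarrow>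
   \<exists>a\<in>part0 (capH r n). \<exists>b\<in>part1 (capH r n). x = vadd (capH r n) a b"
  unfolding capH_simps
  apply (rule bexI[where x="\<lambda>k. if evc r n k then x k else 0"])
   apply (rule bexI[where x="\<lambda>k. if evc r n k then 0 else x k"])
    apply (auto simp: fun_eq_iff)
  done

lemma capH_brkc: "x \<in> carrier (capH r n :: ('f::field, _) lsa) \<Longrightarrow> y \<in> carrier (capH r n) \<Longrightarrow>
   brk (capH r n) x y \<in> carrier (capH r n)"
  unfolding capH_simps by auto

lemma capH_bil:
  "brk (capH r n :: ('f::field, _) lsa) (vadd (capH r n) x y) z = vadd (capH r n) (brk (capH r n) x z) (brk (capH r n) y z)"
  "brk (capH r n :: ('f::field, _) lsa) x (vadd (capH r n) y z) = vadd (capH r n) (brk (capH r n) x y) (brk (capH r n) x z)"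
  "brk (capH r n :: ('f::field, _) lsa) (smul (capH r n) a x) y = smul (capH r n) a (brk (capH r n) x y)"
  "brk (capH r n :: ('f::field, _) lsa) x (smul (capH r n) a y) = smul (capH r n) a (brk (capH r n) x y)"
  unfolding capH_simps by (auto simp: fun_eq_iff algebra_simps)

lemma capH_g00: "r \<le> n \<Longrightarrow> u \<in> part0 (capH r n :: ('f::field, _) lsa) \<Longrightarrow> v \<in> part0 (capH r n) \<Longrightarrow>
   brk (capH r n) u v \<in> part0 (capH r n)"
  unfolding capH_simps by (auto simp: evc_basic evc_shift)

lemma capH_g01: "r \<le> n \<Longrightarrow> u \<in> part0 (capH r n :: ('f::field, _) lsa) \<Longrightarrow> v \<in> part1 (capH r n) \<Longrightarrow>
   brk (capH r n) u v \<in> part1 (capH r n)"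
  unfolding capH_simps by (auto simp: evc_basic evc_shift)

lemma capH_g10: "r \<le> n \<Longrightarrow> u \<in> part1 (capH r n :: ('f::field, _) lsa) \<Longrightarrow> v \<in> part0 (capH r n) \<Longrightarrow>
   brk (capH r n) u v \<in> part1 (capH r n)"
  unfolding capH_simps by (auto simp: evc_basic evc_shift)

lemma capH_g11: "r \<le> n \<Longrightarrow> u \<in> part1 (capH r n :: ('f::field, _) lsa) \<Longrightarrow> v \<in> part1 (capH r n) \<Longrightarrow>
   brk (capH r n) u v \<in> part0 (capH r n)"
  unfolding capH_simps by (auto simp: evc_basic evc_shift)

lemma capH_skew: "r \<le> n \<Longrightarrow> i \<in> {0,1} \<Longrightarrow> j \<in> {0,1} \<Longrightarrow> u \<in> part (capH r n :: ('f::field, _) lsa) i \<Longrightarrow>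
   v \<in> part (capH r n) j \<Longrightarrow> brk (capH r n) u v = smul (capH r n) (- ((-1) ^ (i * j))) (brk (capH r n) v u)"
  unfolding part_def capH_simps by (auto simp: fun_eq_iff algebra_simps evc_basic)

lemma capH_bb: "brk (capH r n :: ('f::field, _) lsa) x (brk (capH r n) y z) =
   (\<lambda>k. if k = 3 then x 0 * (y 0 * z 1 - y 1 * z 0) else 0)"
  unfolding capH_simps by (auto simp: fun_eq_iff)

lemma capH_jac: "r \<le> n \<Longrightarrow> i \<in> {0,1} \<Longrightarrow> j \<in> {0,1} \<Longrightarrow> k \<in> {0,1} \<Longrightarrow>
   x \<in> part (capH r n :: ('f::field, _) lsa) i \<Longrightarrow> y \<in> part (capH r n) j \<Longrightarrow> z \<in> part (capH r n) k \<Longrightarrow>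
        vadd (capH r n) (vadd (capH r n) (smul (capH r n) ((-1) ^ (i * k)) (brk (capH r n) x (brk (capH r n) y z)))
                       (smul (capH r n) ((-1) ^ (j * i)) (brk (capH r n) y (brk (capH r n) z x))))
               (smul (capH r n) ((-1) ^ (k * j)) (brk (capH r n) z (brk (capH r n) x y))) = vzero (capH r n)"
  unfolding capH_bb unfolding part_def capH_simps
  by (auto simp: fun_eq_iff algebra_simps evc_basic)

lemma capH_grade: "r \<le> n \<Longrightarrow> i \<in> {0,1} \<Longrightarrow> j \<in> {0,1} \<Longrightarrow> u \<in> part (capH r n :: ('f::field, _) lsa) i \<Longrightarrow>
   v \<in> part (capH r n) j \<Longrightarrow> brk (capH r n) u v \<in> part (capH r n) ((i + j) mod 2)"
  using capH_g00[of r n u v] capH_g01[of r n u v] capH_g10[of r n u v] capH_g11[of r n u v]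
  by (auto simp: part_def)

lemma capH_lsa: assumes rn: "r \<le> n" shows "lsa (capH r n :: ('f::field, nat \<Rightarrow> 'f) lsa)"
  unfolding lsa_def
proof (intro conjI)
  show "vector_space_on (capH r n :: ('f::field, nat \<Rightarrow> 'f) lsa)"
    by (rule capH_vs)
  show "subspace_of (capH r n :: ('f::field, nat \<Rightarrow> 'f) lsa) (part0 (capH r n :: ('f::field, nat \<Rightarrow> 'f) lsa))"
    using capH_sub0[OF rn] .
  show "subspace_of (capH r n :: ('f::field, nat \<Rightarrow> 'f) lsa) (part1 (capH r n :: ('f::field, nat \<Rightarrow> 'f) lsa))"
    by (rule capH_sub1)
  show "part0 (capH r n :: ('f::field, nat \<Rightarrow> 'f) lsa) \<inter> part1 (capH r n :: ('f::field, nat \<Rightarrow> 'f) lsa) = {vzero (capH r n :: ('f::field, nat \<Rightarrow> 'f) lsa)}"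
    using capH_inter[OF rn] .
  show "(\<forall>x\<in>carrier (capH r n :: ('f::field, nat \<Rightarrow> 'f) lsa). \<exists>a\<in>part0 (capH r n :: ('f::field, nat \<Rightarrow> 'f) lsa). \<exists>b\<in>part1 (capH r n :: ('f::field, nat \<Rightarrow> 'f) lsa). x = vadd (capH r n :: ('f::field, nat \<Rightarrow> 'f) lsa) a b)"
    using capH_decomp[OF rn] by blast
  show "(\<forall>x\<in>carrier (capH r n :: ('f::field, nat \<Rightarrow> 'f) lsa). \<forall>y\<in>carrier (capH r n :: ('f::field, nat \<Rightarrow> 'f) lsa). brk (capH r n :: ('f::field, nat \<Rightarrow> 'f) lsa) x y \<in> carrier (capH r n :: ('f::field, nat \<Rightarrow> 'f) lsa))"
    using capH_brkc by blast
  show "(\<forall>x\<in>carrier (capH r n :: ('f::field, nat \<Rightarrow> 'f) lsa). \<forall>y\<in>carrier (capH r n :: ('f::field, nat \<Rightarrow> 'f) lsa). \<forall>z\<in>carrier (capH r n :: ('f::field, nat \<Rightarrow> 'f) lsa).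
        brk (capH r n :: ('f::field, nat \<Rightarrow> 'f) lsa) (vadd (capH r n :: ('f::field, nat \<Rightarrow> 'f) lsa) x y) z = vadd (capH r n :: ('f::field, nat \<Rightarrow> 'f) lsa) (brk (capH r n :: ('f::field, nat \<Rightarrow> 'f) lsa) x z) (brk (capH r n :: ('f::field, nat \<Rightarrow> 'f) lsa) y z) \<and>
        brk (capH r n :: ('f::field, nat \<Rightarrow> 'f) lsa) x (vadd (capH r n :: ('f::field, nat \<Rightarrow> 'f) lsa) y z) = vadd (capH r n :: ('f::field, nat \<Rightarrow> 'f) lsa) (brk (capH r n :: ('f::field, nat \<Rightarrow> 'f) lsa) x y) (brk (capH r n :: ('f::field, nat \<Rightarrow> 'f) lsa) x z))"
    by (simp add: capH_bil)
  show "(\<forall>a. \<forall>x\<in>carrier (capH r n :: ('f::field, nat \<Rightarrow> 'f) lsa). \<forall>y\<in>carrier (capH r n :: ('f::field, nat \<Rightarrow> 'f) lsa).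
        brk (capH r n :: ('f::field, nat \<Rightarrow> 'f) lsa) (smul (capH r n :: ('f::field, nat \<Rightarrow> 'f) lsa) a x) y = smul (capH r n :: ('f::field, nat \<Rightarrow> 'f) lsa) a (brk (capH r n :: ('f::field, nat \<Rightarrow> 'f) lsa) x y) \<and>
        brk (capH r n :: ('f::field, nat \<Rightarrow> 'f) lsa) x (smul (capH r n :: ('f::field, nat \<Rightarrow> 'f) lsa) a y) = smul (capH r n :: ('f::field, nat \<Rightarrow> 'f) lsa) a (brk (capH r n :: ('f::field, nat \<Rightarrow> 'f) lsa) x y))"
    by (simp add: capH_bil)
  show "(\<forall>i\<in>{0,1}. \<forall>j\<in>{0,1}. \<forall>x\<in>part (capH r n :: ('f::field, nat \<Rightarrow> 'f) lsa) i. \<forall>y\<in>part (capH r n :: ('f::field, nat \<Rightarrow> 'f) lsa) j.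
        brk (capH r n :: ('f::field, nat \<Rightarrow> 'f) lsa) x y \<in> part (capH r n :: ('f::field, nat \<Rightarrow> 'f) lsa) ((i + j) mod 2))"
    using capH_grade[OF rn] by blast
  show "(\<forall>i\<in>{0,1}. \<forall>j\<in>{0,1}. \<forall>x\<in>part (capH r n :: ('f::field, nat \<Rightarrow> 'f) lsa) i. \<forall>y\<in>part (capH r n :: ('f::field, nat \<Rightarrow> 'f) lsa) j.
        brk (capH r n :: ('f::field, nat \<Rightarrow> 'f) lsa) x y = smul (capH r n :: ('f::field, nat \<Rightarrow> 'f) lsa) (- ((-1) ^ (i * j))) (brk (capH r n :: ('f::field, nat \<Rightarrow> 'f) lsa) y x))"
    using capH_skew[OF rn] by blast
  show "(\<forall>i\<in>{0,1}. \<forall>j\<in>{0,1}. \<forall>k\<in>{0,1}.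
        \<forall>x\<in>part (capH r n :: ('f::field, nat \<Rightarrow> 'f) lsa) i. \<forall>y\<in>part (capH r n :: ('f::field, nat \<Rightarrow> 'f) lsa) j. \<forall>z\<in>part (capH r n :: ('f::field, nat \<Rightarrow> 'f) lsa) k.
        vadd (capH r n :: ('f::field, nat \<Rightarrow> 'f) lsa) (vadd (capH r n :: ('f::field, nat \<Rightarrow> 'f) lsa) (smul (capH r n :: ('f::field, nat \<Rightarrow> 'f) lsa) ((-1) ^ (i * k)) (brk (capH r n :: ('f::field, nat \<Rightarrow> 'f) lsa) x (brk (capH r n :: ('f::field, nat \<Rightarrow> 'f) lsa) y z)))
                       (smul (capH r n :: ('f::field, nat \<Rightarrow> 'f) lsa) ((-1) ^ (j * i)) (brk (capH r n :: ('f::field, nat \<Rightarrow> 'f) lsa) y (brk (capH r n :: ('f::field, nat \<Rightarrow> 'f) lsa) z x))))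
               (smul (capH r n :: ('f::field, nat \<Rightarrow> 'f) lsa) ((-1) ^ (k * j)) (brk (capH r n :: ('f::field, nat \<Rightarrow> 'f) lsa) z (brk (capH r n :: ('f::field, nat \<Rightarrow> 'f) lsa) x y))) = vzero (capH r n :: ('f::field, nat \<Rightarrow> 'f) lsa))"
    using capH_jac[OF rn] by blast
qed




definition nonw :: "nat \<Rightarrow> nat \<Rightarrow> bool" where
  "nonw n k \<longleftrightarrow> k \<noteq> 3 \<and> (k < 4+n \<or> 4+2*n \<le> k)"

lemma capH_center: assumes rn: "r \<le> n"
  shows "center (capH r n :: ('f::field, nat \<Rightarrow> 'f) lsa) = {c \<in> carrier (capH r n). \<forall>k. nonw n k \<longrightarrow> c k = 0}"
proof (rule set_eqI, rule iffI)
  fix c :: "nat \<Rightarrow> 'f" assume c: "c \<in> center (capH r n)"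
  have cc: "c \<in> carrier (capH r n)" using c by (simp add: center_def)
  have e0: "ee 0 \<in> carrier (capH r n :: ('f::field, nat \<Rightarrow> 'f) lsa)" by (simp add: capH_simps ee_def)
  have e1: "ee 1 \<in> carrier (capH r n :: ('f::field, nat \<Rightarrow> 'f) lsa)" by (simp add: capH_simps ee_def)
  have b0: "brk (capH r n) c (ee 0) = (\<lambda>k. 0)" using c e0 by (simp add: center_def capH_simps)
  have b1: "brk (capH r n) c (ee 1) = (\<lambda>k. 0)" using c e1 by (simp add: center_def capH_simps)
  have "c 0 = 0" using fun_cong[OF b1, of 2] by (simp add: capH_simps ee_def)
  moreover have "c 1 = 0" using fun_cong[OF b0, of 2] by (simp add: capH_simps ee_def)
  moreover have "c 2 = 0" using fun_cong[OF b0, of 3] by (simp add: capH_simps ee_def)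
  moreover have "c k = 0" if "4 \<le> k" "k < 4+n" for k
    using fun_cong[OF b0, of "k+n"] that by (simp add: capH_simps ee_def)
  moreover have "c k = 0" if "4+2*n \<le> k" for k using cc that by (simp add: capH_simps)
  ultimately have "\<forall>k. nonw n k \<longrightarrow> c k = 0"
    unfolding nonw_def
    by (metis One_nat_def less_2_cases less_Suc_eq numeral_2_eq_2 numeral_3_eq_3 not_less numeral_eq_Suc pred_numeral_simps(2) semiring_norm(26) semiring_norm(27))
  thus "c \<in> {c \<in> carrier (capH r n). \<forall>k. nonw n k \<longrightarrow> c k = 0}" using cc by simp
next
  fix c :: "nat \<Rightarrow> 'f" assume c: "c \<in> {c \<in> carrier (capH r n). \<forall>k. nonw n k \<longrightarrow> c k = 0}"
  have z: "\<forall>k. nonw n k \<longrightarrow> c k = 0" using c by simp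
  have "c 0 = 0" "c 1 = 0" "c 2 = 0" using z by (auto simp: nonw_def)
  moreover have "c (k - n) = 0" if "4+n \<le> k" "k < 4+2*n" for k
  proof -
    have "nonw n (k-n)" using that unfolding nonw_def by linarith
    thus ?thesis using z by blast
  qed
  ultimately have "brk (capH r n) c x = vzero (capH r n)" for x
    by (auto simp: capH_simps fun_eq_iff)
  thus "c \<in> center (capH r n)" using c by (simp add: center_def)
qed




definition emb :: "nat \<Rightarrow> (nat \<Rightarrow> 'f::field) \<times> (nat \<Rightarrow> 'f) \<Rightarrow> nat \<Rightarrow> 'f" where
  "emb n a = (\<lambda>k. if k < 3 then fst a k else if 4 \<le> k \<and> k < 4+n then snd a (k-4) else 0)"

definition proj :: "nat \<Rightarrow> (nat \<Rightarrow> 'f::field) \<Rightarrow> (nat \<Rightarrow> 'f) \<times> (nat \<Rightarrow> 'f)" where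
  "proj n h = (\<lambda>k. if k < 3 then h k else 0, \<lambda>i. if i < n then h (4+i) else 0)"

lemma agree: assumes rn: "r \<le> n"
  and u: "u \<in> carrier (capH r n :: ('f::field, nat \<Rightarrow> 'f) lsa)" and v: "v \<in> carrier (capH r n)"
  and a: "\<forall>k. nonw n k \<longrightarrow> u k = v k"
  shows "coset (capH r n) (center (capH r n)) u = coset (capH r n) (center (capH r n)) v"
proof -
  define c where "c = (\<lambda>k. u k - v k)"
  have c: "c \<in> center (capH r n)" using u v a unfolding capH_center[OF rn] c_def by (simp add: capH_simps)
  have "u = vadd (capH r n) v c" by (simp add: capH_simps c_def)
  thus ?thesis using coset_add_cen[OF capH_lsa[OF rn] v c] by simp
qed

lemma rep_agree: assumes rn: "r \<le> n"
  and u: "u \<in> carrier (capH r n :: ('f::field, nat \<Rightarrow> 'f) lsa)"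
  shows "rep (coset (capH r n) (center (capH r n)) u) \<in> carrier (capH r n)"
    "\<forall>k. nonw n k \<longrightarrow> rep (coset (capH r n) (center (capH r n)) u) k = u k"
proof -
  obtain c where c: "c \<in> center (capH r n)"
    and e: "rep (coset (capH r n) (center (capH r n)) u) = vadd (capH r n) u c"
    using rep_ex[OF capH_lsa[OF rn] u] by blast
  show "rep (coset (capH r n) (center (capH r n)) u) \<in> carrier (capH r n)"
    using rep_carrier[OF capH_lsa[OF rn] u] .
  show "\<forall>k. nonw n k \<longrightarrow> rep (coset (capH r n) (center (capH r n)) u) k = u k"
    using c e unfolding capH_center[OF rn] by (simp add: capH_simps)
qed

lemma brk_agree: assumes a: "\<forall>k. nonw n k \<longrightarrow> u k = u' k" and b: "\<forall>k. nonw n k \<longrightarrow> v k = v' k"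
  shows "brk (capH r n :: ('f::field, nat \<Rightarrow> 'f) lsa) u v = brk (capH r n) u' v'"
proof -
  have "u 0 = u' 0" "u 1 = u' 1" "u 2 = u' 2" "v 0 = v' 0" "v 1 = v' 1" "v 2 = v' 2"
    using a b by (auto simp: nonw_def)
  moreover have "u (k-n) = u' (k-n) \<and> v (k-n) = v' (k-n)" if "4+n \<le> k" "k < 4+2*n" for k
  proof -
    have "nonw n (k-n)" using that unfolding nonw_def by linarith
    thus ?thesis using a b by blast
  qed
  ultimately show ?thesis by (auto simp: capH_simps fun_eq_iff)
qed

lemma hone_sum: "(\<Sum>j<Suc 0. u j * v (Suc j) - u (Suc j) * v j) = u 0 * v 1 - u 1 * (v 0 :: 'f::field)"
  by simp

lemma E1: "a \<in> carrier (dsum (heis 1) (abel r s)) \<Longrightarrow> emb (r+s) a \<in> carrier (capH r (r+s) :: ('f::field, _) lsa)"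
  by (cases a) (simp add: emb_def capH_simps dsum_simps heis_simps abel_simps)

lemma E2: "h \<in> carrier (capH r (r+s) :: ('f::field, _) lsa) \<Longrightarrow> proj (r+s) h \<in> carrier (dsum (heis 1) (abel r s))"
  by (simp add: proj_def capH_simps dsum_simps heis_simps abel_simps)

lemma E2b: "h \<in> carrier (capH r (r+s) :: ('f::field, _) lsa) \<Longrightarrow> nonw (r+s) k \<Longrightarrow> emb (r+s) (proj (r+s) h) k = h k"
  by (auto simp: proj_def emb_def capH_simps nonw_def)

lemma E3: assumes a: "a \<in> carrier (dsum (heis 1) (abel r s) :: ('f::field, _) lsa)"
  and b: "b \<in> carrier (dsum (heis 1) (abel r s) :: ('f::field, _) lsa)"
  and e: "\<forall>k. nonw (r+s) k \<longrightarrow> emb (r+s) a k = emb (r+s) b k"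
  shows "a = b"
proof -
  obtain a1 a2 where aa: "a = (a1,a2)" by (cases a)
  obtain b1 b2 where bb: "b = (b1,b2)" by (cases b)
  have "a1 i = b1 i" for i
  proof (cases "i < 3")
    case True
    hence "nonw (r+s) i" by (simp add: nonw_def)
    thus ?thesis using e True aa bb by (auto simp: emb_def)
  next
    case False thus ?thesis using a b aa bb by (simp add: dsum_simps heis_simps)
  qed
  moreover have "a2 i = b2 i" for i
  proof (cases "i < r+s")
    case True
    hence "nonw (r+s) (4+i)" by (simp add: nonw_def)
    thus ?thesis using e[rule_format, of "4+i"] True aa bb by (auto simp: emb_def)
  next
    case False thus ?thesis using a b aa bb by (simp add: dsum_simps abel_simps)
  qed
  ultimately show ?thesis using aa bb by (simp add: fun_eq_iff)
qed

lemma E4: "emb n (vadd (dsum (heis 1) (abel r s)) a b) = (\<lambda>k. emb n a k + emb n b k)"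
  by (cases a, cases b) (simp add: emb_def dsum_simps heis_simps abel_simps fun_eq_iff)

lemma E5: "emb n (smul (dsum (heis 1) (abel r s)) t a) = (\<lambda>k. t * emb n a k)"
  by (cases a) (simp add: emb_def dsum_simps heis_simps abel_simps fun_eq_iff)

lemma E6: "nonw (r+s) k \<Longrightarrow> brk (capH r (r+s) :: ('f::field, _) lsa) (emb (r+s) a) (emb (r+s) b) k
   = emb (r+s) (brk (dsum (heis 1) (abel r s)) a b) k"
  by (cases a, cases b) (auto simp: emb_def dsum_simps heis_simps abel_simps capH_simps nonw_def)

lemma E7: "a \<in> part0 (dsum (heis 1) (abel r s)) \<Longrightarrow> emb (r+s) a \<in> part0 (capH r (r+s) :: ('f::field, _) lsa)"
  "a \<in> part1 (dsum (heis 1) (abel r s)) \<Longrightarrow> emb (r+s) a \<in> part1 (capH r (r+s) :: ('f::field, _) lsa)"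
  "h \<in> part0 (capH r (r+s) :: ('f::field, _) lsa) \<Longrightarrow> proj (r+s) h \<in> part0 (dsum (heis 1) (abel r s))"
  "h \<in> part1 (capH r (r+s) :: ('f::field, _) lsa) \<Longrightarrow> proj (r+s) h \<in> part1 (dsum (heis 1) (abel r s))"
  by (cases a; auto simp: emb_def proj_def dsum_simps heis_simps abel_simps capH_simps evc_def)+




lemma capable_one:
  shows "capable_via (dsum (heis 1) (abel r s) :: ('f::field, _) lsa) (capH r (r+s) :: ('f, nat \<Rightarrow> 'f) lsa)"
proof -
  define n where "n = r + s"
  define L where "L = (dsum (heis 1) (abel r s) :: ('f::field, _) lsa)"
  define H where "H = (capH r (r+s) :: ('f, nat \<Rightarrow> 'f) lsa)"
  define cs where "cs = coset H (center H)"
  define f where "f = (\<lambda>a. cs (emb (r+s) a))"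
  have rn: "r \<le> r+s" by simp
  have HL: "lsa H" unfolding H_def using capH_lsa[OF rn] .
  note V = lsa_vs[OF HL]
  have ag: "cs u = cs v" if "u \<in> carrier H" "v \<in> carrier H" "\<forall>k. nonw (r+s) k \<longrightarrow> u k = v k" for u v
    using agree[OF rn] that unfolding cs_def H_def by blast
  have ra1: "rep (cs u) \<in> carrier H" if "u \<in> carrier H" for u
    using rep_agree[OF rn] that unfolding cs_def H_def by blast
  have ra2: "\<forall>k. nonw (r+s) k \<longrightarrow> rep (cs u) k = u k" if "u \<in> carrier H" for u
    using rep_agree[OF rn] that unfolding cs_def H_def by blast
  have e1: "emb (r+s) a \<in> carrier H" if "a \<in> carrier L" for a using E1 that unfolding L_def H_def by blast
  have inj: "inj_on f (carrier L)"
  proof (rule inj_onI)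
    fix a b assume a: "a \<in> carrier L" and b: "b \<in> carrier L" and e: "f a = f b"
    obtain c where c: "c \<in> center H" and cc: "emb (r+s) a = vadd H (emb (r+s) b) c"
      using coset_eqD[OF HL e1[OF a] e1[OF b]] e unfolding f_def cs_def by blast
    have "\<forall>k. nonw (r+s) k \<longrightarrow> emb (r+s) a k = emb (r+s) b k"
      using c cc unfolding H_def capH_center[OF rn] by (simp add: capH_simps)
    thus "a = b" using E3 a b unfolding L_def by blast
  qed
  have img: "f ` carrier L = cs ` carrier H"
  proof
    show "f ` carrier L \<subseteq> cs ` carrier H" using e1 unfolding f_def by blast
  next
    show "cs ` carrier H \<subseteq> f ` carrier L"
    proof
      fix A assume "A \<in> cs ` carrier H"
      then obtain h where h: "h \<in> carrier H" and A: "A = cs h" by blast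
      have p: "proj (r+s) h \<in> carrier L" using E2 h unfolding L_def H_def by blast
      have "cs h = f (proj (r+s) h)"
        unfolding f_def using ag[OF h e1[OF p]] E2b h unfolding H_def by metis
      thus "A \<in> f ` carrier L" using A p by blast
    qed
  qed
  have Lc: "vadd L x y \<in> carrier L" "smul L t x \<in> carrier L" "brk L x y \<in> carrier L"
    if "x \<in> carrier L" "y \<in> carrier L" for x y t
    using that by (cases x, cases y, auto simp: L_def dsum_simps heis_simps abel_simps)+
  have fx: "f x = cs (emb (r+s) x)" for x unfolding f_def ..
  have fadd: "f (vadd L x y) = vadd (quot H (center H)) (f x) (f y)"
    if x: "x \<in> carrier L" and y: "y \<in> carrier L" for x y
  proof -
    have "vadd (quot H (center H)) (f x) (f y) = cs (vadd H (rep (f x)) (rep (f y)))"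
      by (simp add: quot_def cs_def)
    also have "\<dots> = f (vadd L x y)"
      unfolding fx
      apply (rule ag[OF vsD(2)[OF V ra1[OF e1[OF x]] ra1[OF e1[OF y]]] e1[OF Lc(1)[OF x y]]])
      using ra2[OF e1[OF x]] ra2[OF e1[OF y]] E4[of "r+s" r s x y]
      by (simp add: H_def L_def capH_simps)
    finally show ?thesis ..
  qed
  have fsmul: "f (smul L t x) = smul (quot H (center H)) t (f x)"
    if x: "x \<in> carrier L" for x t
  proof -
    have "smul (quot H (center H)) t (f x) = cs (smul H t (rep (f x)))"
      by (simp add: quot_def cs_def)
    also have "\<dots> = f (smul L t x)"
      unfolding fx
      apply (rule ag[OF vsD(3)[OF V ra1[OF e1[OF x]]] e1[OF Lc(2)[OF x x]]])
      using ra2[OF e1[OF x]] E5[of "r+s" r s t x]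
      by (simp add: H_def L_def capH_simps)
    finally show ?thesis ..
  qed
  have fbrk: "f (brk L x y) = brk (quot H (center H)) (f x) (f y)"
    if x: "x \<in> carrier L" and y: "y \<in> carrier L" for x y
  proof -
    have "brk (quot H (center H)) (f x) (f y) = cs (brk H (rep (f x)) (rep (f y)))"
      by (simp add: quot_def cs_def)
    also have "brk H (rep (f x)) (rep (f y)) = brk H (emb (r+s) x) (emb (r+s) y)"
      unfolding H_def fx
      by (rule brk_agree) (use ra2[OF e1[OF x]] ra2[OF e1[OF y]] in \<open>simp_all add: fx\<close>)
    also have "cs \<dots> = f (brk L x y)"
      unfolding fx
      apply (rule ag[OF lsa_brkc[OF HL e1[OF x] e1[OF y]] e1[OF Lc(3)[OF x y]]])
      using E6[of r s _ x y] by (simp add: H_def L_def)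
    finally show ?thesis ..
  qed
  have fp0: "f ` part0 L = part0 (quot H (center H))"
  proof
    show "f ` part0 L \<subseteq> part0 (quot H (center H))"
      using E7(1) unfolding f_def L_def H_def cs_def by (auto simp: quot_def intro!: imageI)
  next
    show "part0 (quot H (center H)) \<subseteq> f ` part0 L"
    proof
      fix A assume "A \<in> part0 (quot H (center H))"
      then obtain h where h: "h \<in> part0 H" and A: "A = cs h" by (auto simp: quot_def cs_def)
      have hc: "h \<in> carrier H" using p0c[OF HL h] .
      have p: "proj (r+s) h \<in> part0 L" using E7(3) h unfolding L_def H_def by blast
      have "cs h = f (proj (r+s) h)"
      proof -
        have pc: "proj (r+s) h \<in> carrier L" using E2 hc unfolding L_def H_def by blast
        show ?thesis unfolding f_def using ag[OF hc e1[OF pc]] E2b[of h r s] hc unfolding H_def by metis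
      qed
      thus "A \<in> f ` part0 L" using A p by blast
    qed
  qed
  have fp1: "f ` part1 L = part1 (quot H (center H))"
  proof
    show "f ` part1 L \<subseteq> part1 (quot H (center H))"
      using E7(2) unfolding f_def L_def H_def cs_def by (auto simp: quot_def intro!: imageI)
  next
    show "part1 (quot H (center H)) \<subseteq> f ` part1 L"
    proof
      fix A assume "A \<in> part1 (quot H (center H))"
      then obtain h where h: "h \<in> part1 H" and A: "A = cs h" by (auto simp: quot_def cs_def)
      have hc: "h \<in> carrier H" using p1c[OF HL h] .
      have p: "proj (r+s) h \<in> part1 L" using E7(4) h unfolding L_def H_def by blast
      have "cs h = f (proj (r+s) h)"
      proof -
        have pc: "proj (r+s) h \<in> carrier L" using E2 hc unfolding L_def H_def by blast
        show ?thesis unfolding f_def using ag[OF hc e1[OF pc]] E2b[of h r s] hc unfolding H_def by metis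
      qed
      thus "A \<in> f ` part1 L" using A p by blast
    qed
  qed
  have "bij_betw f (carrier L) (carrier (quot H (center H)))"
    using inj img unfolding bij_betw_def by (simp add: quot_def cs_def)
  hence "lsa_iso L (quot H (center H))"
    unfolding lsa_iso_def using fadd fsmul fbrk fp0 fp1 by blast
  thus ?thesis unfolding capable_via_def L_def H_def using HL unfolding H_def by simp
qed



theorem mainTheorem6:
  fixes m r s :: nat
  assumes "(2::'f::field) \<noteq> 0" and "(3::'f) \<noteq> 0"
    and "m \<ge> 1" and "r + s \<ge> 1"
  shows "((\<exists>H :: ('f, 'h) lsa. capable_via (dsum (heis m) (abel r s) :: ('f, _) lsa) H) \<longrightarrow> m = 1)
       \<and> (m = 1 \<longrightarrow> (\<exists>H :: ('f, nat \<Rightarrow> 'f) lsa. capable_via (dsum (heis m) (abel r s) :: ('f, _) lsa) H))"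
proof (intro conjI impI)
  assume "\<exists>H :: ('f, 'h) lsa. capable_via (dsum (heis m) (abel r s) :: ('f, _) lsa) H"
  then obtain H :: "('f, 'h) lsa" where H: "lsa H"
    and iso: "lsa_iso (dsum (heis m) (abel r s) :: ('f, _) lsa) (quot H (center H))"
    unfolding capable_via_def by blast
  show "m = 1"
  proof (rule ccontr)
    assume "m \<noteq> 1"
    hence "2 \<le> m" using assms(3) by arith
    thus False using not_capable[OF _ H iso] by blast
  qed
next
  assume "m = 1"
  thus "\<exists>H :: ('f, nat \<Rightarrow> 'f) lsa. capable_via (dsum (heis m) (abel r s) :: ('f, _) lsa) H"
    using capable_one by blast
qed

end
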